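(* Let $n\geq 1$ and $s\geq 1$ be integers. Let $G$ be a connected graph on $n+s$ vertices and let $S\subseteq V(G)$ with $|S|=s$. Suppose that every non-terminal level with respect to $S$ contains at least $2$ vertices, and that the second level, if it is non-terminal, contains at least $3$ vertices. Then \[ \sigma(S)\leq \begin{cases} \frac{1}{4}(n^2+8), & \text{if } 2\mid n,\\[2pt] \frac{1}{4}(n^2+7), & \text{if } 2\nmid n. \end{cases} \]
   Context: For a connected graph $G$ and $\emptyset\neq S\subseteq V(G)$, $d_G(S,u)=\min\{d_G(u,v): v\in S\}$, and the status of $S$ is $\sigma(S)=\sigma_G(S)=\sum_{u\in V(G)} d_G(S,u)$. For $i\geq 1$, the $i$-th level with respect to $S$ is the set of vertices $u$ with $d_G(S,u)=i$. The terminal level is the nonempty level with the largest index $i$; the non-terminal levels are all levels $1,\dots,r$ preceding the terminal level $r+1$ (all of which are nonempty by connectivity). *)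

theory Defs
  imports Complex_Main
begin

definition simple_graph :: "'a set \<Rightarrow> ('a \<Rightarrow> 'a \<Rightarrow> bool) \<Rightarrow> bool" where
  "simple_graph V E \<longleftrightarrow> finite V \<and> (\<forall>x y. E x y \<longrightarrow> x \<in> V \<and> y \<in> V)
     \<and> (\<forall>x y. E x y \<longrightarrow> E y x) \<and> (\<forall>x. \<not> E x x)"

definition walk :: "('a \<Rightarrow> 'a \<Rightarrow> bool) \<Rightarrow> 'a list \<Rightarrow> 'a \<Rightarrow> 'a \<Rightarrow> bool" where
  "walk E xs u v \<longleftrightarrow> xs \<noteq> [] \<and> hd xs = u \<and> last xs = v
     \<and> (\<forall>i. Suc i < length xs \<longrightarrow> E (xs ! i) (xs ! Suc i))"

definition connected_graph :: "'a set \<Rightarrow> ('a \<Rightarrow> 'a \<Rightarrow> bool) \<Rightarrow> bool" where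
  "connected_graph V E \<longleftrightarrow> V \<noteq> {} \<and> (\<forall>u\<in>V. \<forall>v\<in>V. \<exists>xs. walk E xs u v)"

definition gdist :: "('a \<Rightarrow> 'a \<Rightarrow> bool) \<Rightarrow> 'a \<Rightarrow> 'a \<Rightarrow> nat" where
  "gdist E u v = (LEAST k. \<exists>xs. walk E xs u v \<and> length xs = Suc k)"

definition setdist :: "('a \<Rightarrow> 'a \<Rightarrow> bool) \<Rightarrow> 'a set \<Rightarrow> 'a \<Rightarrow> nat" where
  "setdist E S u = Min (gdist E u ` S)"

definition status :: "'a set \<Rightarrow> ('a \<Rightarrow> 'a \<Rightarrow> bool) \<Rightarrow> 'a set \<Rightarrow> nat" where
  "status V E S = (\<Sum>u\<in>V. setdist E S u)"

definition level :: "'a set \<Rightarrow> ('a \<Rightarrow> 'a \<Rightarrow> bool) \<Rightarrow> 'a set \<Rightarrow> nat \<Rightarrow> 'a set" where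
  "level V E S i = {u\<in>V. setdist E S u = i}"

definition terminal_index :: "'a set \<Rightarrow> ('a \<Rightarrow> 'a \<Rightarrow> bool) \<Rightarrow> 'a set \<Rightarrow> nat" where
  "terminal_index V E S = Max (setdist E S ` V)"

end

theory Submission
  imports Defs
begin

lemma gdist_self: "gdist E u u = 0"
proof -
  have "walk E [u] u u" by (simp add: walk_def)
  hence "\<exists>xs. walk E xs u u \<and> length xs = Suc 0" by (intro exI[of _ "[u]"]) simp
  thus ?thesis unfolding gdist_def by (rule Least_eq_0)
qed

lemma sum_tri: "2 * (\<Sum>i\<in>{1..<t}. (t - i)) = t * (t - (1::nat))"
proof (induction t)
  case 0 then show ?case by simp
next
  case (Suc t)
  show ?case
  proof (cases t)
    case 0 then show ?thesis by simp
  next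
    case (Suc k)
    have e: "{1..<Suc t} = insert t {1..<t}" using Suc by auto
    have "(\<Sum>i\<in>{1..<Suc t}. (Suc t - i)) = 1 + (\<Sum>i\<in>{1..<t}. (Suc t - i))"
      using Suc by (simp add: e)
    also have "(\<Sum>i\<in>{1..<t}. (Suc t - i)) = (\<Sum>i\<in>{1..<t}. 1 + (t - i))"
      by (rule sum.cong) auto
    also have "\<dots> = (\<Sum>i\<in>{1..<t}. 1) + (\<Sum>i\<in>{1..<t}. (t - i))"
      by (rule sum.distrib)
    also have "(\<Sum>i\<in>{1..<t}. (1::nat)) = t - 1" by simp
    finally have "2 * (\<Sum>i\<in>{1..<Suc t}. (Suc t - i)) = 2 * t + 2 * (\<Sum>i\<in>{1..<t}. (t - i))"
      using Suc by simp
    then show ?thesis using \<open>2 * (\<Sum>i\<in>{1..<t}. (t - i)) = t * (t - 1)\<close> Suc by simp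
  qed
qed

theorem lemma7:
  fixes V :: "'a set" and E :: "'a \<Rightarrow> 'a \<Rightarrow> bool" and S :: "'a set" and n s :: nat
  assumes "n \<ge> 1" and "s \<ge> 1"
    and "simple_graph V E" and "connected_graph V E"
    and "card V = n + s"
    and "S \<subseteq> V" and "card S = s"
    and "\<forall>i. 1 \<le> i \<and> i < terminal_index V E S \<longrightarrow> card (level V E S i) \<ge> 2"
    and "2 < terminal_index V E S \<longrightarrow> card (level V E S 2) \<ge> 3"
  shows "real (status V E S) \<le> (if even n then (real n ^ 2 + 8) / 4 else (real n ^ 2 + 7) / 4)"
proof -
  define t where "t = terminal_index V E S"
  define sd where "sd = setdist E S"
  define L where "L = level V E S"
  define \<sigma> where "\<sigma> = status V E S"
  have finV: "finite V" using assms(3) by (simp add: simple_graph_def)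
  have finS: "finite S" using finV assms(6) finite_subset by blast
  have Sne: "S \<noteq> {}" using assms(2,7) by auto
  have le_t: "sd u \<le> t" if "u \<in> V" for u
    unfolding sd_def t_def terminal_index_def using finV that by simp
  have sd0: "sd u = 0" if "u \<in> S" for u
  proof -
    have "gdist E u u \<in> gdist E u ` S" using that by blast
    hence "Min (gdist E u ` S) \<le> 0" using finS gdist_self[of E u]
      by (metis Min_le finite_imageI)
    thus ?thesis by (simp add: sd_def setdist_def)
  qed
  have finL: "finite (L i)" for i unfolding L_def level_def using finV by simp
  have L0: "card (L 0) \<ge> s"
  proof -
    have "S \<subseteq> L 0" unfolding L_def level_def using assms(6) sd0 sd_def by auto
    thus ?thesis using card_mono[OF finL] assms(7) by metis
  qed
  define D where "D = (\<Sum>u\<in>V. t - sd u)"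
  have sumeq: "\<sigma> + D = t * (n + s)"
  proof -
    have "\<sigma> + D = (\<Sum>u\<in>V. sd u + (t - sd u))"
      by (simp add: \<sigma>_def D_def status_def sd_def sum.distrib)
    also have "\<dots> = (\<Sum>u\<in>V. t)" by (rule sum.cong) (auto dest: le_t)
    finally show ?thesis using assms(5) by simp
  qed
  have Dgroup: "D = (\<Sum>i\<in>{0..t}. (t - i) * card (L i))"
  proof -
    have "D = (\<Sum>i\<in>{0..t}. \<Sum>u\<in>{x\<in>V. sd x = i}. t - sd u)"
      unfolding D_def
      by (rule sum.group[symmetric]) (use finV le_t in auto)
    also have "\<dots> = (\<Sum>i\<in>{0..t}. (t - i) * card (L i))"
      by (rule sum.cong) (auto simp: L_def level_def sd_def)
    finally show ?thesis .
  qed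
  define b :: "nat \<Rightarrow> nat" where "b i = (if i = 2 then 1 else 0)" for i
  have Dlow: "D \<ge> t * s + (\<Sum>i\<in>{1..<t}. (t - i) * 2) + (\<Sum>i\<in>{1..<t}. (t - i) * b i)"
  proof (cases "t = 0")
    case True then show ?thesis by simp
  next
    case False
    have "{0..t} = insert 0 ({1..<t} \<union> {t})" using False by auto
    hence "D = (t - 0) * card (L 0) + (\<Sum>i\<in>{1..<t}. (t - i) * card (L i)) + (t - t) * card (L t)"
      using Dgroup False by simp
    also have "\<dots> \<ge> t * s + (\<Sum>i\<in>{1..<t}. (t - i) * (2 + b i))"
    proof -
      have "(\<Sum>i\<in>{1..<t}. (t - i) * (2 + b i)) \<le> (\<Sum>i\<in>{1..<t}. (t - i) * card (L i))"
      proof (rule sum_mono)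
        fix i assume i: "i \<in> {1..<t}"
        have "2 + b i \<le> card (L i)"
          using assms(8,9) i unfolding b_def L_def t_def by auto
        thus "(t - i) * (2 + b i) \<le> (t - i) * card (L i)" by (rule mult_le_mono2)
      qed
      thus ?thesis using L0 by (simp add: add_mono)
    qed
    also have "(\<Sum>i\<in>{1..<t}. (t - i) * (2 + b i)) = (\<Sum>i\<in>{1..<t}. (t - i) * 2) + (\<Sum>i\<in>{1..<t}. (t - i) * b i)"
      by (simp only: distrib_left sum.distrib)
    finally show ?thesis by (simp only: add.assoc)
  qed
  have bsum: "(\<Sum>i\<in>{1..<t}. (t - i) * b i) = (if 2 < t then t - 2 else 0)"
  proof -
    have "(\<Sum>i\<in>{1..<t}. (t - i) * b i) = (\<Sum>i\<in>{1..<t}. if i = 2 then t - i else 0)"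
      by (rule sum.cong) (auto simp: b_def)
    also have "\<dots> = (if 2 < t then t - 2 else 0)"
      by (simp add: sum.delta)
    finally show ?thesis .
  qed
  have s2: "(\<Sum>i\<in>{1..<t}. (t - i) * 2) = t * (t - 1)"
    using sum_tri[of t] by (simp add: sum_distrib_right[symmetric] mult.commute)
  have key: "int \<sigma> \<le> int t * int n - int t ^ 2 + 2"
  proof -
    have A: "\<sigma> + t * s + t * (t - 1) + (if 2 < t then t - 2 else 0) \<le> t * (n + s)"
      using sumeq Dlow bsum s2 by linarith
    consider "t = 0" | "t = 1" | "t = 2" | "t \<ge> 3" by linarith
    then show ?thesis
    proof cases
      case 1 then show ?thesis using A by simp
    next
      case 2 then show ?thesis using A by simp
    next
      case 3 then show ?thesis using A by (simp add: algebra_simps power2_eq_square)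
    next
      case 4
      then have "int \<sigma> + int t * int s + int t * (int t - 1) + (int t - 2) \<le> int t * (int n + int s)"
      proof -
        have "int (\<sigma> + t * s + t * (t - 1) + (t - 2)) \<le> int (t * (n + s))"
          using A 4 by (simp only: of_nat_le_iff) (simp split: if_splits)
        moreover have "int (t - 1) = int t - 1" "int (t - 2) = int t - 2" using 4 by auto
        ultimately show ?thesis by (simp only: of_nat_add of_nat_mult)
      qed
      then show ?thesis by (simp add: algebra_simps power2_eq_square)
    qed
  qed
  have sq: "4 * int \<sigma> \<le> int n ^ 2 + 8 - (int n - 2 * int t) ^ 2"
    using key by (simp add: algebra_simps power2_eq_square)
  show ?thesis
  proof (cases "even n")
    case True
    have "4 * int \<sigma> \<le> int n ^ 2 + 8" using sq by (smt (verit) zero_le_power2)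
    hence "4 * real \<sigma> \<le> real n ^ 2 + 8" by (metis (mono_tags) of_int_le_iff of_int_of_nat_eq of_int_add of_int_mult of_int_numeral of_int_power)
    thus ?thesis using True by (simp add: \<sigma>_def)
  next
    case False
    have "odd (int n - 2 * int t)" using False by simp
    hence "(int n - 2 * int t) \<noteq> 0" by presburger
    hence "(int n - 2 * int t) ^ 2 \<ge> 1"
      by (smt (verit) power2_eq_square mult_le_0_iff zero_less_mult_iff int_one_le_iff_zero_less)
    hence "4 * int \<sigma> \<le> int n ^ 2 + 7" using sq by linarith
    hence "4 * real \<sigma> \<le> real n ^ 2 + 7" by (metis (mono_tags) of_int_le_iff of_int_of_nat_eq of_int_add of_int_mult of_int_numeral of_int_power)
    thus ?thesis using False by (simp add: \<sigma>_def)
  qed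
qed

end
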